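(* Let $X$ be a topological space and let $G\subset \mathrm{Hom}(X)$ be a group of homeomorphisms of $X$ (acting effectively) such that the topology of pointwise convergence $\tau_p$ is an admissible group topology on $G$; $G$ carries $\tau_p$. Let $\mathcal U_X$ be an equiuniformity on $X$ for the action of $G$. Let $\mathcal U$ be the uniformity on $G$ whose base consists of the coverings $$\{U_{x_1,\dots,x_n;g;\mathrm U}\mid g\in G\},\qquad U_{x_1,\dots,x_n;g;\mathrm U}=\{h\in G\mid (g(x_k),h(x_k))\in \mathrm U,\ k=1,\dots,n\},$$ where $x_1,\dots,x_n\in X$, $n\in\mathbb N$, and $\mathrm U$ is an entourage of $\mathcal U_X$. Let $R_{\mathcal K}$ be the uniformity on $G$ whose base consists of the coverings $\{Og\,\mathrm{St}_{x_1,\dots,x_n}\mid g\in G\}$, where $O$ is a neighbourhood of the identity of $G$ and $x_1,\dots,x_n\in X$, $n\in\mathbb N$. For $x_1,\dots,x_n\in X$ and an entourage $\mathrm U\in\mathcal U_X$ put $O_{x_1,\dots,x_n;\mathrm U}=\{h\in G\mid (x_k,h(x_k))\in\mathrm U,\ (x_k,h^{-1}(x_k))\in\mathrm U,\ k=1,\dots,n\}$. Then: (1) $\mathcal U\subset R_{\mathcal K}$. (2) Suppose that for any points $x_1,\dots,x_n\in X$, $n\in\mathbb N$, and any entourage $\mathrm U\in\mathcal U_X$ there is an entourage $\mathrm V\in\mathcal U_X$ such that: whenever $g,h\in G$ satisfy $(g(x_k),h(x_k))\in\mathrm V$ for $k=1,\dots,n$, there exists $g'\in g\,\mathrm{St}_{x_1,\dots,x_n}$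 with $h\in O_{x_1,\dots,x_n;\mathrm U}\,g'$. Then $\mathcal U=R_{\mathcal K}$.
   Context: The topology of pointwise convergence $\tau_p$ on $G$ has subbase the sets $[x,O]=\{f\in G\mid f(x)\in O\}$, $x\in X$, $O$ open in $X$. A group topology on $G$ is admissible if $G$ is a topological group in it and the action $G\times X\to X$ is continuous. $\mathrm{St}_{x_1,\dots,x_n}=\{g\in G\mid g(x_i)=x_i,\ i=1,\dots,n\}$. A uniformity $\mathcal U_X$ on $X$ (compatible with its topology) is an equiuniformity if every $g\in G$ is uniformly continuous and for every uniform covering $u$ there are a neighbourhood $O$ of the identity of $G$ and a uniform covering $v$ such that $\{OV\mid V\in v\}$ refines $u$. The uniformity $\mathcal U$ is the restriction to $G$, embedded in $X^X$ via $g\mapsto (g(x))_{x\in X}$, of the product uniformity of copies of $\mathcal U_X$. *)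

theory Defs
  imports "HOL-Analysis.Analysis"
begin

text \<open>The space X is the whole type 'a; its topology and its (compatible)
uniformity U_X are those of the class uniform_space.\<close>

definition entourage :: "('a::uniform_space \<times> 'a) set \<Rightarrow> bool" where
  "entourage E \<longleftrightarrow> eventually (\<lambda>p. p \<in> E) uniformity"

definition uniform_cover :: "'a::uniform_space set set \<Rightarrow> bool" where
  "uniform_cover u \<longleftrightarrow> (\<exists>E. entourage E \<and> (\<forall>x. \<exists>C\<in>u. {y. (x, y) \<in> E} \<subseteq> C))"

definition ptop :: "('a::topological_space \<Rightarrow> 'a) set \<Rightarrow> ('a \<Rightarrow> 'a) topology" where
  "ptop G = subtopology (product_topology (\<lambda>_. euclidean) UNIV) G"

definition homeo_group :: "('a::topological_space \<Rightarrow> 'a) set \<Rightarrow> bool" where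
  "homeo_group G \<longleftrightarrow> id \<in> G \<and> (\<forall>g\<in>G. \<forall>h\<in>G. g \<circ> h \<in> G) \<and> (\<forall>g\<in>G. inv g \<in> G)
     \<and> (\<forall>g\<in>G. homeomorphism UNIV UNIV g (inv g))"

definition admissible :: "('a::topological_space \<Rightarrow> 'a) topology \<Rightarrow> ('a \<Rightarrow> 'a) set \<Rightarrow> bool" where
  "admissible T G \<longleftrightarrow> topspace T = G
     \<and> continuous_map (prod_topology T T) T (\<lambda>(f, g). f \<circ> g)
     \<and> continuous_map T T inv
     \<and> continuous_map (prod_topology T euclidean) euclidean (\<lambda>(g, x). g x)"

definition nbhd_id :: "('a::topological_space \<Rightarrow> 'a) set \<Rightarrow> ('a \<Rightarrow> 'a) set \<Rightarrow> bool" where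
  "nbhd_id G W \<longleftrightarrow> W \<subseteq> G \<and> (\<exists>V. openin (ptop G) V \<and> id \<in> V \<and> V \<subseteq> W)"

definition act_set :: "('a \<Rightarrow> 'a) set \<Rightarrow> 'a set \<Rightarrow> 'a set" where
  "act_set W V = {g x | g x. g \<in> W \<and> x \<in> V}"

definition equiuniformity :: "('a::uniform_space \<Rightarrow> 'a) set \<Rightarrow> bool" where
  "equiuniformity G \<longleftrightarrow> (\<forall>g\<in>G. uniformly_continuous_on UNIV g)
     \<and> (\<forall>u. uniform_cover u \<longrightarrow> (\<exists>W v. nbhd_id G W \<and> uniform_cover v
            \<and> (\<forall>V\<in>v. \<exists>C\<in>u. act_set W V \<subseteq> C)))"

definition St :: "('a \<Rightarrow> 'a) set \<Rightarrow> 'a set \<Rightarrow> ('a \<Rightarrow> 'a) set" where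
  "St G F = {g \<in> G. \<forall>x\<in>F. g x = x}"

definition Ucov :: "('a \<Rightarrow> 'a) set \<Rightarrow> 'a set \<Rightarrow> ('a \<Rightarrow> 'a) \<Rightarrow> ('a \<times> 'a) set \<Rightarrow> ('a \<Rightarrow> 'a) set" where
  "Ucov G F g E = {h \<in> G. \<forall>x\<in>F. (g x, h x) \<in> E}"

definition Onb :: "('a \<Rightarrow> 'a) set \<Rightarrow> 'a set \<Rightarrow> ('a \<times> 'a) set \<Rightarrow> ('a \<Rightarrow> 'a) set" where
  "Onb G F E = {h \<in> G. \<forall>x\<in>F. (x, h x) \<in> E \<and> (x, inv h x) \<in> E}"

definition base_U :: "('a::uniform_space \<Rightarrow> 'a) set \<Rightarrow> ('a \<Rightarrow> 'a) set set set" where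
  "base_U G = {{Ucov G F g E | g. g \<in> G} | F E. finite F \<and> entourage E}"

definition base_R :: "('a::uniform_space \<Rightarrow> 'a) set \<Rightarrow> ('a \<Rightarrow> 'a) set set set" where
  "base_R G = {{{a \<circ> g \<circ> s | a s. a \<in> W \<and> s \<in> St G F} | g. g \<in> G} | W F. nbhd_id G W \<and> finite F}"

definition refines :: "'b set set \<Rightarrow> 'b set set \<Rightarrow> bool" where
  "refines a b \<longleftrightarrow> (\<forall>A\<in>a. \<exists>B\<in>b. A \<subseteq> B)"

definition gen_unif :: "'b set \<Rightarrow> 'b set set set \<Rightarrow> 'b set set set" where
  "gen_unif S B = {c. \<Union>c = S \<and> (\<exists>b\<in>B. refines b c)}"

definition hyp2 :: "('a::uniform_space \<Rightarrow> 'a) set \<Rightarrow> bool" where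
  "hyp2 G \<longleftrightarrow> (\<forall>F E. finite F \<and> entourage E \<longrightarrow>
     (\<exists>D. entourage D \<and> (\<forall>g\<in>G. \<forall>h\<in>G. (\<forall>x\<in>F. (g x, h x) \<in> D) \<longrightarrow>
        (\<exists>g'\<in>{g \<circ> s | s. s \<in> St G F}. h \<in> {a \<circ> g' | a. a \<in> Onb G F E}))))"

end

theory Submission
  imports Defs
begin

lemma small_W:
  fixes G :: "('a::uniform_space \<Rightarrow> 'a) set"
  assumes eq: "equiuniformity G" and E: "entourage E"
  shows "\<exists>W. nbhd_id G W \<and> (\<forall>a\<in>W. \<forall>y. (y, a y) \<in> E)"
proof -
  obtain E1 where E1: "eventually E1 uniformity"
    and tr: "\<forall>x y z. E1 (x, y) \<longrightarrow> E1 (y, z) \<longrightarrow> (x, z) \<in> E"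
    using uniformity_trans[of "\<lambda>p. p \<in> E"] E unfolding entourage_def by blast
  define E' where "E' = {p. E1 p \<and> E1 (snd p, fst p)}"
  have E'e: "entourage E'"
    unfolding entourage_def E'_def
    using E1 uniformity_sym[OF E1] by (auto elim: eventually_elim2 simp: split_beta)
  define u where "u = {{z'. (z, z') \<in> E'} | z. True}"
  have "uniform_cover u" unfolding uniform_cover_def u_def using E'e by blast
  then obtain W v where W: "nbhd_id G W" and v: "uniform_cover v"
    and Wv: "\<forall>V\<in>v. \<exists>C\<in>u. act_set W V \<subseteq> C"
    using eq unfolding equiuniformity_def by blast
  obtain D where D: "entourage D" and Dv: "\<forall>x. \<exists>C\<in>v. {y. (x, y) \<in> D} \<subseteq> C"
    using v unfolding uniform_cover_def by blast
  have "(y, a y) \<in> E" if a: "a \<in> W" for a y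
  proof -
    obtain V where V: "V \<in> v" "{y'. (y, y') \<in> D} \<subseteq> V" using Dv by blast
    have "(y, y) \<in> D" using D uniformity_refl unfolding entourage_def by blast
    hence yV: "y \<in> V" using V by blast
    obtain C where C: "C \<in> u" "act_set W V \<subseteq> C" using Wv V by blast
    obtain z where z: "C = {z'. (z, z') \<in> E'}" using C u_def by blast
    have "a y \<in> act_set W V" "id y \<in> act_set W V"
      using a yV W unfolding act_set_def nbhd_id_def by blast+
    hence "(z, a y) \<in> E'" "(z, y) \<in> E'" using C z by auto
    thus ?thesis using tr unfolding E'_def by auto
  qed
  thus ?thesis using W by blast
qed

lemma W_contains_Onb:
  fixes G :: "('a::uniform_space \<Rightarrow> 'a) set"
  assumes W: "nbhd_id G W"
  shows "\<exists>F0 E. finite F0 \<and> entourage E \<and> (\<forall>F. F0 \<subseteq> F \<longrightarrow> Onb G F E \<subseteq> W)"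
proof -
  obtain V where V: "openin (ptop G) V" "id \<in> V" "V \<subseteq> W" and WG: "W \<subseteq> G"
    using W unfolding nbhd_id_def by blast
  obtain T where T: "openin (product_topology (\<lambda>_. euclidean) UNIV) T" "V = T \<inter> G"
    using V(1) unfolding ptop_def openin_subtopology by blast
  have "id \<in> T" using V T by blast
  then obtain U where U: "finite {i. U i \<noteq> UNIV}" "\<forall>i. open (U i)"
     "id \<in> Pi\<^sub>E UNIV U" "Pi\<^sub>E UNIV U \<subseteq> T"
    using T(1) unfolding openin_product_topology_alt by auto
  define F0 where "F0 = {i. U i \<noteq> UNIV}"
  have xU: "x \<in> U x" for x using U(3) by auto
  have "\<forall>x\<in>F0. eventually (\<lambda>p. fst p = x \<longrightarrow> snd p \<in> U x) uniformity"
  proof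
    fix x assume "x \<in> F0"
    have "eventually (\<lambda>(x', y). x' = x \<longrightarrow> y \<in> U x) uniformity"
      using U(2) xU open_uniformity by blast
    thus "eventually (\<lambda>p. fst p = x \<longrightarrow> snd p \<in> U x) uniformity"
      by (simp add: split_beta')
  qed
  hence ev: "eventually (\<lambda>p. \<forall>x\<in>F0. fst p = x \<longrightarrow> snd p \<in> U x) uniformity"
    using U(1) F0_def by (intro eventually_ball_finite) auto
  define E where "E = {p. \<forall>x\<in>F0. fst p = x \<longrightarrow> snd p \<in> U x}"
  have "entourage E" unfolding entourage_def E_def using ev by simp
  moreover have "Onb G F E \<subseteq> W" if "F0 \<subseteq> F" for F
  proof
    fix a assume a: "a \<in> Onb G F E"
    hence aG: "a \<in> G" and ax: "\<forall>x\<in>F. (x, a x) \<in> E" unfolding Onb_def by auto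
    have "a i \<in> U i" for i
    proof (cases "i \<in> F0")
      case True thus ?thesis using ax that unfolding E_def by auto
    next
      case False thus ?thesis unfolding F0_def by auto
    qed
    hence "a \<in> Pi\<^sub>E UNIV U" by auto
    thus "a \<in> W" using U(4) T(2) V(3) aG by blast
  qed
  ultimately show ?thesis using U(1) F0_def by blast
qed

theorem theorem2p1:
  fixes G :: "('a::uniform_space \<Rightarrow> 'a) set"
  assumes "homeo_group G"
    and "admissible (ptop G) G"
    and "equiuniformity G"
  shows "gen_unif G (base_U G) \<subseteq> gen_unif G (base_R G)
         \<and> (hyp2 G \<longrightarrow> gen_unif G (base_U G) = gen_unif G (base_R G))"
proof -
  have grp: "\<And>g h. g \<in> G \<Longrightarrow> h \<in> G \<Longrightarrow> g \<circ> h \<in> G"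
    using assms(1) unfolding homeo_group_def by blast
  have P1: "gen_unif G (base_U G) \<subseteq> gen_unif G (base_R G)"
  proof
    fix c assume "c \<in> gen_unif G (base_U G)"
    then obtain F E where c: "\<Union>c = G" "finite F" "entourage E"
      and ref: "refines {Ucov G F g E | g. g \<in> G} c"
      unfolding gen_unif_def base_U_def by blast
    obtain W where W: "nbhd_id G W" and WE: "\<forall>a\<in>W. \<forall>y. (y, a y) \<in> E"
      using small_W[OF assms(3) c(3)] by blast
    have WG: "W \<subseteq> G" using W nbhd_id_def by blast
    have "refines {{a \<circ> g \<circ> s | a s. a \<in> W \<and> s \<in> St G F} | g. g \<in> G} c"
      unfolding refines_def
    proof clarify
      fix g assume g: "g \<in> G"
      obtain C where C: "C \<in> c" "Ucov G F g E \<subseteq> C"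
        using ref g unfolding refines_def by blast
      have "{a \<circ> g \<circ> s | a s. a \<in> W \<and> s \<in> St G F} \<subseteq> Ucov G F g E"
      proof clarify
        fix a s assume a: "a \<in> W" and s: "s \<in> St G F"
        have "a \<circ> g \<circ> s \<in> G" using a s g WG grp unfolding St_def by auto
        moreover have "\<forall>x\<in>F. (g x, (a \<circ> g \<circ> s) x) \<in> E"
          using s WE a unfolding St_def by auto
        ultimately show "a \<circ> g \<circ> s \<in> Ucov G F g E" unfolding Ucov_def by blast
      qed
      thus "\<exists>B\<in>c. {a \<circ> g \<circ> s | a s. a \<in> W \<and> s \<in> St G F} \<subseteq> B" using C by blast
    qed
    moreover have "{{a \<circ> g \<circ> s | a s. a \<in> W \<and> s \<in> St G F} | g. g \<in> G} \<in> base_R G"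
      unfolding base_R_def using W c(2) by blast
    ultimately show "c \<in> gen_unif G (base_R G)" unfolding gen_unif_def using c(1) by blast
  qed
  have P2: "gen_unif G (base_R G) \<subseteq> gen_unif G (base_U G)" if h2: "hyp2 G"
  proof
    fix c assume "c \<in> gen_unif G (base_R G)"
    then obtain W F where c: "\<Union>c = G" "finite F" "nbhd_id G W"
      and ref: "refines {{a \<circ> g \<circ> s | a s. a \<in> W \<and> s \<in> St G F} | g. g \<in> G} c"
      unfolding gen_unif_def base_R_def by blast
    obtain F0 E where F0: "finite F0" "entourage E" "\<forall>F'. F0 \<subseteq> F' \<longrightarrow> Onb G F' E \<subseteq> W"
      using W_contains_Onb[OF c(3)] by blast
    define F' where "F' = F \<union> F0"
    have fF': "finite F'" using F'_def F0 c by simp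
    obtain D where D: "entourage D" and DH: "\<forall>g\<in>G. \<forall>h\<in>G. (\<forall>x\<in>F'. (g x, h x) \<in> D) \<longrightarrow>
        (\<exists>g'\<in>{g \<circ> s | s. s \<in> St G F'}. h \<in> {a \<circ> g' | a. a \<in> Onb G F' E})"
      using h2 fF' F0(2) unfolding hyp2_def by blast
    have OW: "Onb G F' E \<subseteq> W" using F0(3) F'_def by blast
    have "refines {Ucov G F' g D | g. g \<in> G} c"
      unfolding refines_def
    proof clarify
      fix g assume g: "g \<in> G"
      obtain C where C: "C \<in> c" "{a \<circ> g \<circ> s | a s. a \<in> W \<and> s \<in> St G F} \<subseteq> C"
        using ref g unfolding refines_def by blast
      have "Ucov G F' g D \<subseteq> {a \<circ> g \<circ> s | a s. a \<in> W \<and> s \<in> St G F}"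
      proof
        fix h assume "h \<in> Ucov G F' g D"
        hence "h \<in> G" "\<forall>x\<in>F'. (g x, h x) \<in> D" unfolding Ucov_def by auto
        then obtain s a where s: "s \<in> St G F'" and a: "a \<in> Onb G F' E" and h: "h = a \<circ> (g \<circ> s)"
          using DH g by blast
        have "s \<in> St G F" using s F'_def unfolding St_def by auto
        moreover have "a \<in> W" using a OW by blast
        ultimately show "h \<in> {a \<circ> g \<circ> s | a s. a \<in> W \<and> s \<in> St G F}"
          using h by (auto simp: comp_assoc)
      qed
      thus "\<exists>B\<in>c. Ucov G F' g D \<subseteq> B" using C by blast
    qed
    moreover have "{Ucov G F' g D | g. g \<in> G} \<in> base_U G"
      unfolding base_U_def using D fF' by blast
    ultimately show "c \<in> gen_unif G (base_U G)" unfolding gen_unif_def using c(1) by blast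
  qed
  show ?thesis using P1 P2 by blast
qed

end
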